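(* Let $k\ge 3$ and $n>3$. Protocol 3 (Cross-edges Tree), run on $n$ nodes with one node initially in $L_0$ and the others in $F$, never stabilises with isolated nodes: in every stable configuration reached by a fair execution, every node belongs to the leader's connected component (in particular no node remains in state $F$).
   Context: Network constructor model: $n$ nodes, every pair may interact; node states from a finite set; each node pair has an edge state in $\{0,1\}$, initially $0$. At each step a pair of nodes is selected and updated according to the transition rules (either ordering of the pair); unlisted triples are unchanged. A configuration is stable if no listed rule is applicable to any pair of nodes. An infinite execution is fair if whenever a configuration $C$ occurs infinitely often, every configuration reachable from $C$ in one step occurs infinitely often. Protocol 3 (Cross-edges Tree), for a parameter $k$: $Q=\{F,L_0,\dots,L_k,O_0,\dots,O_k\}$, rules $(L_x,F,0)\to(L_{x+1},O_0,1)$ for $x<k$; $(O_y,F,0)\to(O_{y+1},O_0,1)$ for $y<k$; $(L_x,O_y,0)\to(L_{x+1},O_{y+1},1)$ for $x,y<k-1$; $(O_y,O_z,0)\to(O_{y+1},O_{z+1},1)$ for $y,z<k-1$. *)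

theory Defs
  imports Main
begin

text \<open>Node states of Protocol 3 (Cross-edges Tree). The counters are bounded by k
  through the guards of the rules (all reachable states have index at most k).\<close>
datatype st = SF | SL nat | SO nat

text \<open>Configurations on nodes 0..n-1: node states and (symmetric) edge states.\<close>
type_synonym config = "(nat \<Rightarrow> st) \<times> (nat \<Rightarrow> nat \<Rightarrow> bool)"

fun delta :: "nat \<Rightarrow> st \<Rightarrow> st \<Rightarrow> bool \<Rightarrow> (st \<times> st \<times> bool) option" where
  "delta k (SL x) SF False = (if x < k then Some (SL (x+1), SO 0, True) else None)"
| "delta k (SO y) SF False = (if y < k then Some (SO (y+1), SO 0, True) else None)"
| "delta k (SL x) (SO y) False =
     (if x < k - 1 \<and> y < k - 1 then Some (SL (x+1), SO (y+1), True) else None)"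
| "delta k (SO y) (SO z) False =
     (if y < k - 1 \<and> z < k - 1 then Some (SO (y+1), SO (z+1), True) else None)"
| "delta k _ _ _ = None"

definition upd :: "config \<Rightarrow> nat \<Rightarrow> nat \<Rightarrow> st \<Rightarrow> st \<Rightarrow> bool \<Rightarrow> config" where
  "upd C u v a b c =
     ((fst C)(u := a, v := b),
      (snd C)(u := (snd C u)(v := c), v := (snd C v)(u := c)))"

definition interact :: "nat \<Rightarrow> config \<Rightarrow> nat \<Rightarrow> nat \<Rightarrow> config" where
  "interact k C u v =
     (case delta k (fst C u) (fst C v) (snd C u v) of
        Some (a, b, c) \<Rightarrow> upd C u v a b c
      | None \<Rightarrow> (case delta k (fst C v) (fst C u) (snd C u v) of
                  Some (a, b, c) \<Rightarrow> upd C v u a b c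
                | None \<Rightarrow> C))"

definition step :: "nat \<Rightarrow> nat \<Rightarrow> config \<Rightarrow> config \<Rightarrow> bool" where
  "step k n C C' \<longleftrightarrow> (\<exists>u<n. \<exists>v<n. u \<noteq> v \<and> C' = interact k C u v)"

definition applicable :: "nat \<Rightarrow> config \<Rightarrow> nat \<Rightarrow> nat \<Rightarrow> bool" where
  "applicable k C u v \<longleftrightarrow> delta k (fst C u) (fst C v) (snd C u v) \<noteq> None"

definition stable :: "nat \<Rightarrow> nat \<Rightarrow> config \<Rightarrow> bool" where
  "stable k n C \<longleftrightarrow> (\<forall>u<n. \<forall>v<n. u \<noteq> v \<longrightarrow> \<not> applicable k C u v)"

definition init :: config where
  "init = ((\<lambda>i. if i = 0 then SL 0 else SF), (\<lambda>_ _. False))"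

definition fair_exec :: "nat \<Rightarrow> nat \<Rightarrow> (nat \<Rightarrow> config) \<Rightarrow> bool" where
  "fair_exec k n X \<longleftrightarrow>
     X 0 = init \<and>
     (\<forall>i. step k n (X i) (X (Suc i))) \<and>
     (\<forall>C. infinite {i. X i = C} \<longrightarrow>
          (\<forall>C'. step k n C C' \<longrightarrow> infinite {i. X i = C'}))"

definition active_edges :: "nat \<Rightarrow> config \<Rightarrow> (nat \<times> nat) set" where
  "active_edges n C = {(a, b). a < n \<and> b < n \<and> snd C a b}"

definition is_leader_state :: "st \<Rightarrow> bool" where
  "is_leader_state q \<longleftrightarrow> (\<exists>x. q = SL x)"

end

theory Submission
  imports Defs
begin

fun cnt_lt :: "nat \<Rightarrow> st \<Rightarrow> bool" where
  "cnt_lt k SF = False"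
| "cnt_lt k (SL x) = (x < k)"
| "cnt_lt k (SO y) = (y < k)"

lemma delta_props:
  assumes "delta k a b e = Some (a', b', c)"
  shows "c \<and> a \<noteq> SF \<and> a' \<noteq> SF \<and> b' \<noteq> SF \<and> cnt_lt k b' \<and>
         (is_leader_state a' \<longleftrightarrow> is_leader_state a) \<and> \<not> is_leader_state b"
  using assms
  by (cases "(k,a,b,e)" rule: delta.cases) (auto simp: is_leader_state_def split: if_splits)

definition pinv :: "nat \<Rightarrow> nat \<Rightarrow> config \<Rightarrow> bool" where
  "pinv k n C \<longleftrightarrow> is_leader_state (fst C 0) \<and>
     (\<forall>a b. snd C a b \<longrightarrow> fst C a \<noteq> SF \<and> fst C b \<noteq> SF) \<and>
     (\<forall>v<n. fst C v \<noteq> SF \<longrightarrow> (0,v) \<in> (active_edges n C)\<^sup>*) \<and>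
     (\<exists>w<n. cnt_lt k (fst C w))"

lemma inv_init: "k > 0 \<Longrightarrow> n > 0 \<Longrightarrow> pinv k n init"
  unfolding pinv_def init_def is_leader_state_def by auto

lemma inv_upd:
  assumes I: "pinv k n C" and ab: "a < n" "b < n" "a \<noteq> b"
    and d: "delta k (fst C a) (fst C b) e = Some (a', b', c)"
  shows "pinv k n (upd C a b a' b' c)"
proof -
  note P = delta_props[OF d]
  let ?C = "upd C a b a' b' c"
  have fst': "fst ?C = (fst C)(a := a', b := b')" by (simp add: upd_def)
  have snd': "\<And>x y. snd ?C x y = (if x = b \<and> y = a then True else if x = a \<and> y = b then True
      else snd C x y)" using ab(3) P by (simp add: upd_def)
  have sm: "snd C x y \<Longrightarrow> snd ?C x y" for x y using snd'[of x y] by simp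
  have mono: "active_edges n C \<subseteq> active_edges n ?C"
    unfolding active_edges_def using sm by blast
  have mono2: "(active_edges n C)\<^sup>* \<subseteq> (active_edges n ?C)\<^sup>*"
    using mono by (rule rtrancl_mono)
  from I have L: "is_leader_state (fst C 0)"
    and E: "\<forall>x y. snd C x y \<longrightarrow> fst C x \<noteq> SF \<and> fst C y \<noteq> SF"
    and R: "\<forall>v<n. fst C v \<noteq> SF \<longrightarrow> (0,v) \<in> (active_edges n C)\<^sup>*"
    unfolding pinv_def by auto
  have 1: "is_leader_state (fst ?C 0)"
    using L P ab fst' by auto
  have 2: "\<forall>x y. snd ?C x y \<longrightarrow> fst ?C x \<noteq> SF \<and> fst ?C y \<noteq> SF"
  proof (intro allI impI)
    fix x y assume "snd ?C x y"
    then show "fst ?C x \<noteq> SF \<and> fst ?C y \<noteq> SF"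
      using E P fst' snd'[of x y] by (auto split: if_splits)
  qed
  have pa: "(0,a) \<in> (active_edges n ?C)\<^sup>*" using R P ab mono2 by auto
  have 3: "\<forall>v<n. fst ?C v \<noteq> SF \<longrightarrow> (0,v) \<in> (active_edges n ?C)\<^sup>*"
  proof (intro allI impI)
    fix v assume v: "v < n" "fst ?C v \<noteq> SF"
    show "(0,v) \<in> (active_edges n ?C)\<^sup>*"
    proof (cases "v = b")
      case True
      have "(a,b) \<in> active_edges n ?C" using snd' ab by (simp add: active_edges_def)
      then show ?thesis using pa True by (meson rtrancl_into_rtrancl)
    next
      case False
      then show ?thesis
      proof (cases "v = a")
        case True then show ?thesis using pa by simp
      next
        case False
        then have "fst C v \<noteq> SF" using v fst' \<open>v \<noteq> b\<close> by auto
        then show ?thesis using R v mono2 by auto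
      qed
    qed
  qed
  have 4: "\<exists>w<n. cnt_lt k (fst ?C w)" using P ab fst' by (intro exI[of _ b]) auto
  show ?thesis using 1 2 3 4 unfolding pinv_def by blast
qed

lemma inv_step:
  assumes "pinv k n C" "step k n C C'"
  shows "pinv k n C'"
proof -
  obtain u v where uv: "u < n" "v < n" "u \<noteq> v" "C' = interact k C u v"
    using assms(2) unfolding step_def by blast
  show ?thesis
  proof (cases "delta k (fst C u) (fst C v) (snd C u v)")
    case (Some r)
    obtain a b c where "r = (a,b,c)" by (cases r) auto
    then show ?thesis using Some uv inv_upd[OF assms(1) uv(1-3)]
      by (simp add: interact_def)
  next
    case None
    show ?thesis
    proof (cases "delta k (fst C v) (fst C u) (snd C u v)")
      case (Some r)
      obtain a b c where "r = (a,b,c)" by (cases r) auto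
      then show ?thesis using None Some uv inv_upd[OF assms(1) uv(2) uv(1)] 
        by (simp add: interact_def)
    next
      case None2: None
      then show ?thesis using None uv assms(1) by (simp add: interact_def)
    qed
  qed
qed

theorem corollary1:
  fixes k n :: nat and X :: "nat \<Rightarrow> config" and i :: nat
  assumes "k \<ge> 3" and "n > 3"
    and "fair_exec k n X"
    and "stable k n (X i)"
  shows "is_leader_state (fst (X i) 0) \<and>
         (\<forall>v<n. (0, v) \<in> (active_edges n (X i))\<^sup>* \<and> fst (X i) v \<noteq> SF)"
proof -
  have I: "pinv k n (X j)" for j
  proof (induction j)
    case 0 then show ?case using assms inv_init unfolding fair_exec_def by auto
  next
    case (Suc j) then show ?case using assms(3) inv_step unfolding fair_exec_def by blast
  qed
  let ?C = "X i"
  from I[of i] obtain w where w: "w < n" "cnt_lt k (fst ?C w)"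
    and E: "\<forall>x y. snd ?C x y \<longrightarrow> fst ?C x \<noteq> SF \<and> fst ?C y \<noteq> SF"
    and R: "\<forall>v<n. fst ?C v \<noteq> SF \<longrightarrow> (0,v) \<in> (active_edges n ?C)\<^sup>*"
    and L: "is_leader_state (fst ?C 0)"
    unfolding pinv_def by blast
  have nf: "fst ?C v \<noteq> SF" if "v < n" for v
  proof
    assume F: "fst ?C v = SF"
    have "w \<noteq> v" using w F by auto
    have ne: "\<not> snd ?C w v" using E F by auto
    have "applicable k ?C w v"
      using w F ne unfolding applicable_def
      by (cases "fst ?C w") auto
    then show False using assms(4) w that \<open>w \<noteq> v\<close> unfolding stable_def by blast
  qed
  show ?thesis using L R nf by auto
qed

end
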